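(* Let $w$ be a word over the alphabet $\{a^{\pm1},t^{\pm1},x^{\pm1}\}$ with $\sigma_x(w)=0$. If the equation $w=1$ has a solution in $L_2$, then it has a solution $x=(\delta,f)\in L_2$ with $$|\delta|\le 2^{|w|^2/2}+2|w|^2+3|w|+1 .$$
   Context: $\mathbb{Z}_2$ is the field with two elements and $\mathbb{Z}_2[z^{\pm1}]$ the ring of Laurent polynomials over it. The lamplighter group $L_2=\mathbb{Z}_2\wr\mathbb{Z}$ is realized as the set $\mathbb{Z}\times\mathbb{Z}_2[z^{\pm1}]$ with multiplication $(\delta_1,f_1)(\delta_2,f_2)=(\delta_1+\delta_2,\ f_1z^{-\delta_2}+f_2)$; it is generated by $a=(0,1)$ and $t=(1,0)$. A one-variable equation is given by a word $w$ over $\{a^{\pm1},t^{\pm1},x^{\pm1}\}$ (an element of the free group $F(a,t,x)$), $|w|$ is its length, and a solution of $w=1$ is an element $g\in L_2$ such that $w(a,t,g)=1$ in $L_2$, where $w(a,t,g)$ is the image of $w$ under the homomorphism $F(a,t,x)\to L_2$ with $a\mapsto a$, $t\mapsto t$, $x\mapsto g$. $\sigma_x(w)$ and $\sigma_t(w)$ denote the exponent sums of $x$ and of $t$ in $w$. *)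

theory Defs
  imports Complex_Main
begin

text \<open>Lamplighter group L2 = Z2 wr Z as pairs (delta, f) with f a finitely supported
  function int => bool (f n = coefficient of z^n in the Laurent polynomial over Z2).
  Multiplication (d1,f1)(d2,f2) = (d1+d2, f1 z^(-d2) + f2).\<close>

type_synonym lamp = "int \<times> (int \<Rightarrow> bool)"

definition in_L2 :: "lamp \<Rightarrow> bool" where
  "in_L2 g \<longleftrightarrow> finite {n. snd g n}"

definition lmult :: "lamp \<Rightarrow> lamp \<Rightarrow> lamp" where
  "lmult g h = (fst g + fst h, (\<lambda>n. snd g (n + fst h) \<noteq> snd h n))"

definition lone :: lamp where
  "lone = (0, (\<lambda>n. False))"

definition linv :: "lamp \<Rightarrow> lamp" where
  "linv g = (- fst g, (\<lambda>n. snd g (n - fst g)))"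

definition gen_a :: lamp where
  "gen_a = (0, (\<lambda>n. n = 0))"

definition gen_t :: lamp where
  "gen_t = (1, (\<lambda>n. False))"

datatype letter = LA | LT | LX

text \<open>A word over {a^{+-1}, t^{+-1}, x^{+-1}}: list of (letter, sign), True = exponent +1.\<close>
type_synonym word = "(letter \<times> bool) list"

fun letter_val :: "lamp \<Rightarrow> letter \<Rightarrow> lamp" where
  "letter_val g LA = gen_a"
| "letter_val g LT = gen_t"
| "letter_val g LX = g"

definition sym_val :: "lamp \<Rightarrow> letter \<times> bool \<Rightarrow> lamp" where
  "sym_val g s = (if snd s then letter_val g (fst s) else linv (letter_val g (fst s)))"

definition eval_word :: "word \<Rightarrow> lamp \<Rightarrow> lamp" where
  "eval_word w g = foldr (\<lambda>s acc. lmult (sym_val g s) acc) w lone"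

definition sigma_x :: "word \<Rightarrow> int" where
  "sigma_x w = (\<Sum>s\<leftarrow>w. if fst s = LX then (if snd s then 1 else -1) else 0)"

definition is_solution :: "word \<Rightarrow> lamp \<Rightarrow> bool" where
  "is_solution w g \<longleftrightarrow> in_L2 g \<and> eval_word w g = lone"

end

theory Submission
  imports Defs
begin

fun fpart :: "(int \<times> int) list \<Rightarrow> int \<Rightarrow> (int \<Rightarrow> bool) \<Rightarrow> int \<Rightarrow> bool" where
  "fpart [] d f N = False"
| "fpart (cb # ts) d f N = (f (N + fst cb * d + snd cb) \<noteq> fpart ts d f N)"

fun apart :: "(int \<times> int) list \<Rightarrow> int \<Rightarrow> int \<Rightarrow> bool" where
  "apart [] d N = False"
| "apart (cb # ts) d N = ((N + fst cb * d + snd cb = 0) \<noteq> apart ts d N)"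

definition solves :: "(int \<times> int) list \<Rightarrow> (int \<times> int) list \<Rightarrow> int \<Rightarrow> (int \<Rightarrow> bool) \<Rightarrow> bool" where
  "solves fts ats d f \<longleftrightarrow> finite {N. f N} \<and> (\<forall>N. fpart fts d f N = apart ats d N)"

definition phx :: "letter \<times> bool \<Rightarrow> int" where
  "phx s = (if fst s = LX then (if snd s then 1 else -1) else 0)"
definition pht :: "letter \<times> bool \<Rightarrow> int" where
  "pht s = (if fst s = LT then (if snd s then 1 else -1) else 0)"

definition sx :: "word \<Rightarrow> int" where "sx w = sum_list (map phx w)"
definition st :: "word \<Rightarrow> int" where "st w = sum_list (map pht w)"

fun ftm :: "word \<Rightarrow> (int \<times> int) list" where
  "ftm [] = []"
| "ftm (s # w) = (if fst s = LX then (if snd s then (sx w, st w) else (sx w - 1, st w)) # ftm w else ftm w)"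

fun atm :: "word \<Rightarrow> (int \<times> int) list" where
  "atm [] = []"
| "atm (s # w) = (if fst s = LA then (sx w, st w) # atm w else atm w)"

lemma eval_word_Cons: "eval_word (s # w) g = lmult (sym_val g s) (eval_word w g)"
  by (simp add: eval_word_def)
lemma eval_word_Nil: "eval_word [] g = lone" by (simp add: eval_word_def)

lemma eval_formula:
  "eval_word w (d, f) = (st w + d * sx w, \<lambda>N. fpart (ftm w) d f N \<noteq> apart (atm w) d N)"
proof (induction w)
  case Nil then show ?case by (simp add: eval_word_Nil lone_def sx_def st_def)
next
  case (Cons s w)
  obtain l e where s: "s = (l, e)" by (cases s)
  show ?case using Cons
    by (cases l; cases e; auto simp: s eval_word_Cons lmult_def sym_val_def linv_def gen_a_def gen_t_def sx_def st_def phx_def pht_def algebra_simps fun_eq_iff)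
qed

lemma sigma_x_sx: "sigma_x w = sx w"
  unfolding sigma_x_def sx_def phx_def by simp

definition cnt :: "(int \<times> int) list \<Rightarrow> int \<Rightarrow> int \<Rightarrow> nat" where
  "cnt ts d s = length (filter (\<lambda>cb. fst cb * d + snd cb = s) ts)"

definition Od :: "(int \<times> int) list \<Rightarrow> int \<Rightarrow> int set" where
  "Od ts d = {s. odd (cnt ts d s)}"

lemma Od_sub: "Od ts d \<subseteq> (\<lambda>cb. fst cb * d + snd cb) ` set ts"
proof
  fix s assume "s \<in> Od ts d"
  then have "cnt ts d s \<noteq> 0" unfolding Od_def by (metis even_zero mem_Collect_eq)
  then have "filter (\<lambda>cb. fst cb * d + snd cb = s) ts \<noteq> []" unfolding cnt_def by auto
  then obtain cb where "cb \<in> set ts" "fst cb * d + snd cb = s"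
    by (metis (mono_tags, lifting) filter_False)
  then show "s \<in> (\<lambda>cb. fst cb * d + snd cb) ` set ts" by auto
qed

lemma Od_finite: "finite (Od ts d)"
  by (rule finite_subset[OF Od_sub]) simp

lemma Od_Cons: "Od (cb # ts) d = (if fst cb * d + snd cb \<in> Od ts d
   then Od ts d - {fst cb * d + snd cb} else insert (fst cb * d + snd cb) (Od ts d))"
proof -
  have c: "cnt (cb # ts) d s = cnt ts d s + (if s = fst cb * d + snd cb then 1 else 0)" for s
    unfolding cnt_def by simp
  show ?thesis unfolding Od_def using c by (auto simp: set_eq_iff)
qed

lemma fpart_Od: "fpart ts d f N = odd (card {s \<in> Od ts d. f (N + s)})"
proof (induction ts)
  case Nil
  then show ?case by (simp add: Od_def cnt_def)
next
  case (Cons cb ts)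
  define s0 where "s0 = fst cb * d + snd cb"
  define S where "S = {s \<in> Od ts d. f (N + s)}"
  have fS: "finite S" unfolding S_def using Od_finite by auto
  have e: "N + fst cb * d + snd cb = N + s0" unfolding s0_def by simp
  show ?case
  proof (cases "f (N + s0)")
    case False
    have "{s \<in> Od (cb # ts) d. f (N + s)} = S"
      unfolding S_def Od_Cons s0_def[symmetric] using False by auto
    then show ?thesis using Cons False S_def by (simp add: e)
  next
    case True
    show ?thesis
    proof (cases "s0 \<in> Od ts d")
      case True2: True
      have "{s \<in> Od (cb # ts) d. f (N + s)} = S - {s0}"
        unfolding S_def Od_Cons s0_def[symmetric] using True2 by auto
      moreover have "s0 \<in> S" using True True2 S_def by auto
      ultimately have ce: "card S = card {s \<in> Od (cb # ts) d. f (N + s)} + 1"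
        using fS by (metis Suc_eq_plus1 card_Suc_Diff1)
      have "fpart (cb # ts) d f N = (\<not> fpart ts d f N)" using True by (simp add: e)
      also have "\<dots> = (\<not> odd (card S))" using Cons.IH S_def by simp
      also have "\<dots> = odd (card {s \<in> Od (cb # ts) d. f (N + s)})" unfolding ce by simp
      finally show ?thesis .
    next
      case False2: False
      have "{s \<in> Od (cb # ts) d. f (N + s)} = insert s0 S"
        unfolding S_def Od_Cons s0_def[symmetric] using False2 True by auto
      moreover have "s0 \<notin> S" using False2 S_def by auto
      ultimately have ce: "card {s \<in> Od (cb # ts) d. f (N + s)} = card S + 1"
        using fS by simp
      have "fpart (cb # ts) d f N = (\<not> fpart ts d f N)" using True by (simp add: e)
      also have "\<dots> = (\<not> odd (card S))" using Cons.IH S_def by simp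
      also have "\<dots> = odd (card {s \<in> Od (cb # ts) d. f (N + s)})" unfolding ce by simp
      finally show ?thesis .
    qed
  qed
qed

lemma apart_ex: "apart ts d N \<Longrightarrow> \<exists>cb\<in>set ts. N + fst cb * d + snd cb = 0"
  by (induction ts) (auto split: if_splits)

lemma supp_bound:
  assumes sol: "solves fts ats d f" and d: "d > 0"
    and bnd: "\<forall>cb\<in>set fts \<union> set ats. 0 \<le> fst cb \<and> fst cb \<le> int H \<and> 0 \<le> snd cb \<and> snd cb \<le> int \<tau>"
  shows "\<exists>f0. solves fts ats d f0 \<and> (\<forall>N. f0 N \<longrightarrow> \<bar>N\<bar> \<le> int H * d + int \<tau>)"
proof (cases "Od fts d = {}")
  case True
  have z: "fpart fts d g N = False" for g N using True by (simp add: fpart_Od)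
  show ?thesis
  proof (intro exI[of _ "\<lambda>_. False"] conjI allI impI)
    show "solves fts ats d (\<lambda>_. False)" using sol unfolding solves_def by (simp add: z)
  qed auto
next
  case False
  define Sp where "Sp = {N. f N}"
  have fin: "finite Sp" using sol Sp_def solves_def by auto
  have eq: "\<forall>N. fpart fts d f N = apart ats d N" using sol solves_def by auto
  have fOd: "finite (Od fts d)" by (rule Od_finite)
  have diff: "M \<le> int H * d + int \<tau> \<and> - (int H * d + int \<tau>) \<le> M"
    if "cb \<in> set fts" "cb' \<in> set ats" "M = fst cb * d + snd cb - fst cb' * d - snd cb'" for M cb cb'
  proof -
    have b1: "0 \<le> fst cb" "fst cb \<le> int H" "0 \<le> snd cb" "snd cb \<le> int \<tau>" using bnd that by auto
    have b2: "0 \<le> fst cb'" "fst cb' \<le> int H" "0 \<le> snd cb'" "snd cb' \<le> int \<tau>" using bnd that by auto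
    have m: "M = (fst cb - fst cb') * d + (snd cb - snd cb')" using that(3) by (simp add: algebra_simps)
    have "(fst cb - fst cb') * d \<le> int H * d" by (rule mult_right_mono) (use b1 b2 d in auto)
    moreover have "(- int H) * d \<le> (fst cb - fst cb') * d" by (rule mult_right_mono) (use b1 b2 d in auto)
    ultimately show ?thesis using m b1 b2 by auto
  qed
  have up: "N \<le> int H * d + int \<tau>" if "f N" for N
  proof -
    define m where "m = Max Sp"
    have ne: "Sp \<noteq> {}" using that Sp_def by auto
    have mS: "m \<in> Sp" "N \<le> m" using Max_in[OF fin ne] Max_ge[OF fin, of N] that Sp_def m_def by auto
    define s where "s = Min (Od fts d)"
    have sO: "s \<in> Od fts d" using False fOd s_def by auto
    have "{s' \<in> Od fts d. f (m - s + s')} = {s}"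
    proof (rule set_eqI, rule iffI)
      fix s' assume "s' \<in> {s' \<in> Od fts d. f (m - s + s')}"
      then have a: "s' \<in> Od fts d" "f (m - s + s')" by auto
      have "s \<le> s'" using a fOd s_def by auto
      moreover have "m - s + s' \<le> m" using a fin Sp_def m_def by auto
      ultimately show "s' \<in> {s}" by auto
    next
      fix s' assume "s' \<in> {s}"
      then show "s' \<in> {s' \<in> Od fts d. f (m - s + s')}" using sO mS Sp_def by auto
    qed
    then have "fpart fts d f (m - s)" by (simp add: fpart_Od)
    then have "apart ats d (m - s)" using eq by simp
    then obtain cb' where cb': "cb' \<in> set ats" "m - s + fst cb' * d + snd cb' = 0" using apart_ex by blast
    obtain cb where cb: "cb \<in> set fts" "s = fst cb * d + snd cb" using sO Od_sub by blast
    have "m = fst cb * d + snd cb - fst cb' * d - snd cb'" using cb cb' by simp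
    then show ?thesis using diff[OF cb(1) cb'(1)] mS by auto
  qed
  have lo: "- (int H * d + int \<tau>) \<le> N" if "f N" for N
  proof -
    define m where "m = Min Sp"
    have ne: "Sp \<noteq> {}" using that Sp_def by auto
    have mS: "m \<in> Sp" "m \<le> N" using Min_in[OF fin ne] Min_le[OF fin, of N] that Sp_def m_def by auto
    define s where "s = Max (Od fts d)"
    have sO: "s \<in> Od fts d" using False fOd s_def by auto
    have "{s' \<in> Od fts d. f (m - s + s')} = {s}"
    proof (rule set_eqI, rule iffI)
      fix s' assume "s' \<in> {s' \<in> Od fts d. f (m - s + s')}"
      then have a: "s' \<in> Od fts d" "f (m - s + s')" by auto
      have "s' \<le> s" using a fOd s_def by auto
      moreover have "m \<le> m - s + s'" using a fin Sp_def m_def by auto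
      ultimately show "s' \<in> {s}" by auto
    next
      fix s' assume "s' \<in> {s}"
      then show "s' \<in> {s' \<in> Od fts d. f (m - s + s')}" using sO mS Sp_def by auto
    qed
    then have "fpart fts d f (m - s)" by (simp add: fpart_Od)
    then have "apart ats d (m - s)" using eq by simp
    then obtain cb' where cb': "cb' \<in> set ats" "m - s + fst cb' * d + snd cb' = 0" using apart_ex by blast
    obtain cb where cb: "cb \<in> set fts" "s = fst cb * d + snd cb" using sO Od_sub by blast
    have "m = fst cb * d + snd cb - fst cb' * d - snd cb'" using cb cb' by simp
    then show ?thesis using diff[OF cb(1) cb'(1)] mS by auto
  qed
  show ?thesis
  proof (intro exI[of _ f] conjI allI impI)
    fix N assume "f N"
    then show "\<bar>N\<bar> \<le> int H * d + int \<tau>" using up[of N] lo[of N] by linarith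
  qed (rule sol)
qed

lemma dm: assumes "0 < (D::int)" "0 \<le> x" "x < D"
  shows "(Q*D + x) div D = Q" "(Q*D + x) mod D = x"
proof -
  have "(x + Q*D) div D = x div D + Q" using assms(1) by simp
  then show "(Q*D + x) div D = Q" using assms by (simp add: add.commute div_pos_pos_trivial)
  have "(x + Q*D) mod D = x mod D" by simp
  then show "(Q*D + x) mod D = x" using assms by (simp add: add.commute)
qed

lemma zero_cases: assumes "0 < (D::int)" "0 \<le> x" "x < 2*D"
  shows "Q*D + x = 0 \<longleftrightarrow> (Q = 0 \<and> x = 0) \<or> (Q = -1 \<and> x = D)"
proof (cases "Q \<ge> 1")
  case True
  then have "Q*D \<ge> 1*D" using assms by (intro mult_right_mono) auto
  then have "Q*D + x \<noteq> 0" using assms by linarith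
  then show ?thesis using True by auto
next
  case False
  show ?thesis
  proof (cases "Q \<le> -2")
    case True
    then have "Q*D \<le> (-2)*D" using assms by (intro mult_right_mono) auto
    then have "Q*D + x \<noteq> 0" using assms by linarith
    then show ?thesis using True by auto
  next
    case False2: False
    then have "Q = 0 \<or> Q = -1" using False by linarith
    then show ?thesis using assms by auto
  qed
qed

lemma fpart_transfer:
  "(\<forall>cb\<in>set ts. g (N + fst cb * d' + snd cb) = h (M + fst cb * d + snd cb)) \<Longrightarrow>
   fpart ts d' g N = fpart ts d h M"
  by (induction ts) auto

lemma apart_transfer:
  "(\<forall>cb\<in>set ts. (N + fst cb * d' + snd cb = 0) = (M + fst cb * d + snd cb = 0)) \<Longrightarrow>
   apart ts d' N = apart ts d M"
  by (induction ts) auto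

lemma cut_step:
  assumes bnd: "\<forall>cb\<in>set fts \<union> set ats. 0 \<le> fst cb \<and> fst cb \<le> int H \<and> 0 \<le> snd cb \<and> snd cb \<le> int \<tau>"
    and sol: "solves fts ats d f" and dbig: "d > 2^((2*H+2)*\<tau>) + int \<tau>"
  shows "\<exists>d' f'. 0 < d' \<and> d' < d \<and> solves fts ats d' f'"
proof -
  have p0: "(0::int) < 2^((2*H+2)*\<tau>)" by simp
  have dpos: "d > 0" using dbig p0 by linarith
  have dtau: "d > int \<tau>" using dbig p0 by linarith
  obtain f0 where sol0: "solves fts ats d f0" and sb: "\<And>N. f0 N \<Longrightarrow> \<bar>N\<bar> \<le> int H * d + int \<tau>"
    using supp_bound[OF sol dpos bnd] by blast
  define B where "B = {-(int H)-1 .. int H} \<times> {0..< int \<tau>}"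
  have finB: "finite B" unfolding B_def by simp
  have cI: "card {-(int H)-1 .. int H} = 2*H+2"
  proof -
    have "int H + 1 - (-(int H) - 1) = int (2*H+2)" by simp
    then show ?thesis by (simp only: card_atLeastAtMost_int nat_int)
  qed
  have cardB: "card B = (2*H+2)*\<tau>" unfolding B_def card_cartesian_product cI by simp
  define state where "state r = {qj \<in> B. f0 (fst qj * d + r + snd qj)}" for r
  define R where "R = {1 .. d - int \<tau>}"
  have cardR: "card R = nat (d - int \<tau>)" unfolding R_def by simp
  have "state ` R \<subseteq> Pow B" unfolding state_def by auto
  then have "card (state ` R) \<le> card (Pow B)" using finB by (intro card_mono) auto
  also have "\<dots> = 2^((2*H+2)*\<tau>)" using finB cardB by (simp add: card_Pow)
  also have "\<dots> < card R"
  proof -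
    have "int (2^((2*H+2)*\<tau>)) < d - int \<tau>" using dbig by simp
    then show ?thesis unfolding cardR by linarith
  qed
  finally have "\<not> inj_on state R" by (intro pigeonhole)
  then obtain ra rb where rab: "ra \<in> R" "rb \<in> R" "ra \<noteq> rb" "state ra = state rb"
    unfolding inj_on_def by blast
  obtain r1 r2 where r12: "r1 \<in> R" "r2 \<in> R" "r1 < r2" "state r1 = state r2"
  proof (cases "ra < rb")
    case True then show ?thesis using rab that by blast
  next
    case False then have "rb < ra" using rab by auto
    then show ?thesis using rab that by metis
  qed
  have r1b: "1 \<le> r1" "r2 \<le> d - int \<tau>" using r12 R_def by auto
  have outside: "\<not> f0 (q * d + r + j)" if "q < - int H - 1 \<or> q > int H" "1 \<le> r" "r \<le> d - int \<tau>" "0 \<le> j" "j < int \<tau>" for q r j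
  proof
    assume "f0 (q * d + r + j)"
    then have ab: "\<bar>q * d + r + j\<bar> \<le> int H * d + int \<tau>" by (rule sb)
    show False
    proof (cases "q > int H")
      case True
      then have "q * d \<ge> (int H + 1) * d" using dpos by (intro mult_right_mono) auto
      then show False using ab that dtau by (simp add: algebra_simps abs_le_iff)
    next
      case False
      then have "q \<le> - int H - 2" using that by auto
      then have "q * d \<le> (- int H - 2) * d" using dpos by (intro mult_right_mono) auto
      then show False using ab that dtau by (simp add: algebra_simps abs_le_iff)
    qed
  qed
  have colEq: "f0 (q * d + r1 + j) = f0 (q * d + r2 + j)" if "0 \<le> j" "j < int \<tau>" for q j
  proof (cases "q < - int H - 1 \<or> q > int H")
    case True
    then show ?thesis using outside[of q r1 j] outside[of q r2 j] that r12 R_def by auto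
  next
    case False
    then have "(q, j) \<in> B" unfolding B_def using that by auto
    then show ?thesis using r12(4) unfolding state_def set_eq_iff by auto
  qed
  define L where "L = r2 - r1"
  define d' where "d' = d - L"
  have d'b: "d' \<ge> r1 + int \<tau>" "d' < d" "0 < L" using r1b r12 by (auto simp: d'_def L_def)
  define \<rho> where "\<rho> s = (if s < r1 then s else s + L)" for s
  define \<phi> where "\<phi> N = (N div d') * d + \<rho> (N mod d')" for N
  define f' where "f' N = f0 (\<phi> N)" for N
  have d'pos: "0 < d'" using d'b r1b by linarith
  have C0: "f' (Q * d' + s) = f0 (Q * d + \<rho> s)" if "0 \<le> s" "s < d'" for Q s
    using dm[OF d'pos that] unfolding f'_def \<phi>_def by simp
  have C1: "f' (Q * d' + s) = f0 (Q * d + s)" if "0 \<le> s" "s < d'" "s < r1 + int \<tau>" for Q s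
  proof (cases "s < r1")
    case True then show ?thesis using C0[OF that(1,2)] \<rho>_def by simp
  next
    case False
    have "f' (Q*d' + s) = f0 (Q*d + (s + L))" using C0[OF that(1,2)] False \<rho>_def by simp
    also have "\<dots> = f0 (Q*d + r2 + (s - r1))" by (simp add: L_def algebra_simps)
    also have "\<dots> = f0 (Q*d + r1 + (s - r1))" using colEq[of "s - r1" Q] False that by simp
    also have "\<dots> = f0 (Q*d + s)" by simp
    finally show ?thesis .
  qed
  have C2: "f' (Q * d' + s) = f0 (Q * d + s + L)" if "r1 \<le> s" "s < d'" for Q s
    using C0[of s Q] that r1b \<rho>_def by (simp add: algebra_simps)
  have T: "f' (N + c * d' + b) = f0 (\<phi> N + c * d + b) \<and> ((N + c * d' + b = 0) = (\<phi> N + c * d + b = 0))"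
    if "0 \<le> b" "b \<le> int \<tau>" for N c b
  proof -
    define q where "q = N div d'"
    define r where "r = N mod d'"
    have N: "N = q * d' + r" unfolding q_def r_def by simp
    have r: "0 \<le> r" "r < d'" using d'pos r_def by auto
    have ph: "\<phi> N = q * d + \<rho> r" unfolding \<phi>_def q_def r_def by simp
    have part1: "f' (N + c * d' + b) = f0 (\<phi> N + c * d + b)"
    proof (cases "r + b < d'")
      case True
      have e: "N + c * d' + b = (q + c) * d' + (r + b)" using N by (simp add: algebra_simps)
      show ?thesis
      proof (cases "r < r1")
        case True2: True
        have "f' (N + c*d' + b) = f0 ((q+c)*d + (r+b))" unfolding e using C1[of "r+b" "q+c"] True True2 r that by simp
        also have "\<dots> = f0 (\<phi> N + c*d + b)" using ph True2 \<rho>_def by (simp add: algebra_simps)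
        finally show ?thesis .
      next
        case False2: False
        have "f' (N + c*d' + b) = f0 ((q+c)*d + (r+b) + L)" unfolding e using C2[of "r+b" "q+c"] True False2 that by simp
        also have "\<dots> = f0 (\<phi> N + c*d + b)" using ph False2 \<rho>_def by (simp add: algebra_simps)
        finally show ?thesis .
      qed
    next
      case False
      have e: "N + c * d' + b = (q + c + 1) * d' + (r + b - d')" using N by (simp add: algebra_simps)
      have s: "0 \<le> r + b - d'" "r + b - d' < d'" "r + b - d' < r1 + int \<tau>" using False r that d'b r1b by auto
      have rr: "\<not> r < r1" using False that d'b by auto
      have "f' (N + c*d' + b) = f0 ((q+c+1)*d + (r + b - d'))" unfolding e using C1[OF s] by simp
      also have "\<dots> = f0 (\<phi> N + c*d + b)" using ph rr \<rho>_def by (simp add: d'_def algebra_simps)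
      finally show ?thesis .
    qed
    have part2: "(N + c * d' + b = 0) = (\<phi> N + c * d + b = 0)"
    proof -
      have e1: "N + c * d' + b = (q + c) * d' + (r + b)" using N by (simp add: algebra_simps)
      have e2: "\<phi> N + c * d + b = (q + c) * d + (\<rho> r + b)" using ph by (simp add: algebra_simps)
      have z1: "N + c * d' + b = 0 \<longleftrightarrow> (q + c = 0 \<and> r + b = 0) \<or> (q + c = -1 \<and> r + b = d')"
        unfolding e1 by (rule zero_cases) (use d'pos r that d'b r1b in auto)
      have rho: "0 \<le> \<rho> r" "\<rho> r < d" using r d'b unfolding \<rho>_def d'_def by auto
      have z2: "\<phi> N + c * d + b = 0 \<longleftrightarrow> (q + c = 0 \<and> \<rho> r + b = 0) \<or> (q + c = -1 \<and> \<rho> r + b = d)"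
        unfolding e2 by (rule zero_cases) (use dpos rho that dtau in auto)
      show ?thesis
      proof (cases "r < r1")
        case True
        then show ?thesis using z1 z2 \<rho>_def r that d'b by auto
      next
        case False
        then show ?thesis using z1 z2 \<rho>_def r that d'b r1b by (auto simp: d'_def)
      qed
    qed
    show ?thesis using part1 part2 by simp
  qed
  have rhoI: "x = y" if "\<rho> x = \<rho> y" for x y
    using that d'b unfolding \<rho>_def by (auto split: if_splits)
  have inj: "inj \<phi>"
  proof (rule injI)
    fix N1 N2 assume h: "\<phi> N1 = \<phi> N2"
    have rho: "0 \<le> \<rho> (N mod d')" "\<rho> (N mod d') < d" for N
      using d'pos d'b pos_mod_sign[OF d'pos, of N] pos_mod_bound[OF d'pos, of N] unfolding \<rho>_def d'_def by auto
    have dv: "\<phi> N div d = N div d'" "\<phi> N mod d = \<rho> (N mod d')" for N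
      unfolding \<phi>_def using dm[OF dpos rho(1) rho(2)] by auto
    have "N1 div d' = N2 div d'" using dv(1)[of N1] dv(1)[of N2] h by simp
    moreover have "N1 mod d' = N2 mod d'" using dv(2)[of N1] dv(2)[of N2] h rhoI by metis
    ultimately show "N1 = N2" by (metis div_mult_mod_eq)
  qed
  have fin0: "finite {N. f0 N}" using sol0 solves_def by auto
  have "{N. f' N} = \<phi> -` {N. f0 N}" unfolding f'_def by auto
  then have fin': "finite {N. f' N}" using finite_vimageI[OF fin0 inj] by simp
  have eq0: "fpart fts d f0 M = apart ats d M" for M using sol0 solves_def by auto
  have "fpart fts d' f' N = apart ats d' N" for N
  proof -
    have "fpart fts d' f' N = fpart fts d f0 (\<phi> N)"
      by (rule fpart_transfer) (use T bnd in auto)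
    also have "\<dots> = apart ats d (\<phi> N)" by (rule eq0)
    also have "\<dots> = apart ats d' N"
      by (rule apart_transfer[symmetric]) (use T bnd in auto)
    finally show ?thesis .
  qed
  then have "solves fts ats d' f'" using fin' solves_def by auto
  then show ?thesis using d'pos d'b by blast
qed

lemma core_ind:
  assumes bnd: "\<forall>cb\<in>set fts \<union> set ats. 0 \<le> fst cb \<and> fst cb \<le> int H \<and> 0 \<le> snd cb \<and> snd cb \<le> int \<tau>"
  shows "0 < d \<Longrightarrow> solves fts ats d f \<Longrightarrow>
    \<exists>d' f'. 0 < d' \<and> d' \<le> 2^((2*H+2)*\<tau>) + int \<tau> \<and> solves fts ats d' f'"
proof (induction "nat d" arbitrary: d f rule: less_induct)
  case less
  show ?case
  proof (cases "d \<le> 2^((2*H+2)*\<tau>) + int \<tau>")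
    case True then show ?thesis using less.prems by blast
  next
    case False
    then obtain d1 f1 where h: "0 < d1" "d1 < d" "solves fts ats d1 f1"
      using cut_step[OF bnd less.prems(2)] by force
    have "nat d1 < nat d" using h by simp
    then show ?thesis using less.hyps h by blast
  qed
qed

definition shiftl :: "int \<Rightarrow> int \<Rightarrow> (int \<times> int) list \<Rightarrow> (int \<times> int) list" where
  "shiftl g b ts = map (\<lambda>cb. (fst cb - g, snd cb - b)) ts"

lemma fpart_shift: "fpart (shiftl g b ts) d f N = fpart ts d f (N - g * d - b)"
  by (induction ts) (auto simp: shiftl_def algebra_simps)

lemma apart_shift: "apart (shiftl g b ts) d N = apart ts d (N - g * d - b)"
  by (induction ts) (auto simp: shiftl_def algebra_simps)

lemma solves_shift: "solves (shiftl g b fts) (shiftl g b ats) d f = solves fts ats d f"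
proof -
  have "(\<forall>N. fpart fts d f (N - g * d - b) = apart ats d (N - g * d - b)) = (\<forall>N. fpart fts d f N = apart ats d N)"
  proof
    assume h: "\<forall>N. fpart fts d f (N - g * d - b) = apart ats d (N - g * d - b)"
    show "\<forall>N. fpart fts d f N = apart ats d N"
    proof
      fix N show "fpart fts d f N = apart ats d N" using h[rule_format, of "N + g * d + b"] by simp
    qed
  qed auto
  then show ?thesis unfolding solves_def fpart_shift apart_shift by simp
qed

lemma shiftl_shiftl: "shiftl (-g) (-b) (shiftl g b ts) = ts"
  by (induction ts) (auto simp: shiftl_def)

definition refl :: "(int \<times> int) list \<Rightarrow> (int \<times> int) list" where
  "refl ts = map (\<lambda>cb. (fst cb, - snd cb)) ts"

lemma refl_refl: "refl (refl ts) = ts"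
  by (induction ts) (auto simp: refl_def)

lemma fpart_refl: "fpart (refl ts) (-d) (\<lambda>N. f (-N)) (-N) = fpart ts d f N"
  by (induction ts) (auto simp: refl_def algebra_simps)

lemma apart_refl: "apart (refl ts) (-d) (-N) = apart ts d N"
  by (induction ts) (auto simp: refl_def algebra_simps)

lemma solves_refl: assumes "solves fts ats d f" shows "solves (refl fts) (refl ats) (-d) (\<lambda>N. f (-N))"
proof -
  have fin: "finite {N. f N}" using assms solves_def by auto
  have "{N. f (-N)} = uminus -` {N. f N}" by auto
  then have fin': "finite {N. f (-N)}" using finite_vimageI[OF fin, of uminus] inj_uminus by simp
  have "fpart (refl fts) (-d) (\<lambda>N. f (-N)) N = apart (refl ats) (-d) N" for N
    using fpart_refl[of fts d f "-N"] apart_refl[of ats d "-N"] assms solves_def by auto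
  then show ?thesis using fin' solves_def by auto
qed

lemma pos_reduce:
  assumes bnd: "\<forall>cb\<in>set fts \<union> set ats. g0 \<le> fst cb \<and> fst cb \<le> g0 + int H \<and> b0 \<le> snd cb \<and> snd cb \<le> b0 + int \<tau>"
    and sol: "solves fts ats d f" and d: "0 < d"
  shows "\<exists>d' f'. 0 < d' \<and> d' \<le> 2^((2*H+2)*\<tau>) + int \<tau> \<and> solves fts ats d' f'"
proof -
  have bnd': "\<forall>cb\<in>set (shiftl g0 b0 fts) \<union> set (shiftl g0 b0 ats). 0 \<le> fst cb \<and> fst cb \<le> int H \<and> 0 \<le> snd cb \<and> snd cb \<le> int \<tau>"
  proof
    fix cb assume "cb \<in> set (shiftl g0 b0 fts) \<union> set (shiftl g0 b0 ats)"
    then obtain cb0 where h: "cb0 \<in> set fts \<union> set ats" "cb = (fst cb0 - g0, snd cb0 - b0)"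
      unfolding shiftl_def by auto
    have "g0 \<le> fst cb0 \<and> fst cb0 \<le> g0 + int H \<and> b0 \<le> snd cb0 \<and> snd cb0 \<le> b0 + int \<tau>"
      using bnd h(1) by blast
    then show "0 \<le> fst cb \<and> fst cb \<le> int H \<and> 0 \<le> snd cb \<and> snd cb \<le> int \<tau>" using h(2) by auto
  qed
  have "solves (shiftl g0 b0 fts) (shiftl g0 b0 ats) d f" using sol solves_shift by blast
  then obtain d' f' where "0 < d'" "d' \<le> 2^((2*H+2)*\<tau>) + int \<tau>" "solves (shiftl g0 b0 fts) (shiftl g0 b0 ats) d' f'"
    using core_ind[OF bnd' d] by blast
  then show ?thesis using solves_shift by blast
qed

lemma reduce:
  assumes bnd: "\<forall>cb\<in>set fts \<union> set ats. g0 \<le> fst cb \<and> fst cb \<le> g0 + int H \<and> b0 \<le> snd cb \<and> snd cb \<le> b0 + int \<tau>"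
    and sol: "solves fts ats d f"
  shows "\<exists>d' f'. \<bar>d'\<bar> \<le> 2^((2*H+2)*\<tau>) + int \<tau> \<and> solves fts ats d' f'"
proof (cases "0 < d")
  case True
  then show ?thesis using pos_reduce[OF bnd sol] by force
next
  case False
  show ?thesis
  proof (cases "d = 0")
    case True then show ?thesis using sol by (intro exI[of _ 0] exI[of _ f]) simp
  next
    case False2: False
    have d: "0 < - d" using False False2 by simp
    have bnd': "\<forall>cb\<in>set (refl fts) \<union> set (refl ats). g0 \<le> fst cb \<and> fst cb \<le> g0 + int H \<and> (-b0 - int \<tau>) \<le> snd cb \<and> snd cb \<le> (-b0 - int \<tau>) + int \<tau>"
    proof
      fix cb assume "cb \<in> set (refl fts) \<union> set (refl ats)"
      then obtain cb0 where h: "cb0 \<in> set fts \<union> set ats" "cb = (fst cb0, - snd cb0)"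
        unfolding refl_def by auto
      have "g0 \<le> fst cb0 \<and> fst cb0 \<le> g0 + int H \<and> b0 \<le> snd cb0 \<and> snd cb0 \<le> b0 + int \<tau>"
        using bnd h(1) by blast
      then show "g0 \<le> fst cb \<and> fst cb \<le> g0 + int H \<and> (-b0 - int \<tau>) \<le> snd cb \<and> snd cb \<le> (-b0 - int \<tau>) + int \<tau>" using h(2) by auto
    qed
    obtain d' f' where h: "0 < d'" "d' \<le> 2^((2*H+2)*\<tau>) + int \<tau>" "solves (refl fts) (refl ats) d' f'"
      using pos_reduce[OF bnd' solves_refl[OF sol] d] by blast
    have "solves fts ats (-d') (\<lambda>N. f' (-N))" using solves_refl[OF h(3)] refl_refl by simp
    then show ?thesis using h by (intro exI[of _ "-d'"] exI[of _ "\<lambda>N. f' (-N)"]) simp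
  qed
qed

lemma terms_suffix:
  "\<forall>cb\<in>set (ftm w) \<union> set (atm w). (\<exists>i\<le>length w. fst cb = sx (drop i w)) \<and> (\<exists>j\<le>length w. snd cb = st (drop j w))"
proof (induction w)
  case Nil then show ?case by simp
next
  case (Cons s w)
  have old: "(\<exists>i\<le>length (s#w). fst cb = sx (drop i (s#w))) \<and> (\<exists>j\<le>length (s#w). snd cb = st (drop j (s#w)))"
    if "cb \<in> set (ftm w) \<union> set (atm w)" for cb
  proof -
    have h: "(\<exists>i\<le>length w. fst cb = sx (drop i w)) \<and> (\<exists>j\<le>length w. snd cb = st (drop j w))"
      by (rule bspec[OF Cons.IH that])
    obtain i j where "i \<le> length w" "fst cb = sx (drop i w)" "j \<le> length w" "snd cb = st (drop j w)"
      using h by (elim conjE exE) assumption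
    then show ?thesis by (intro conjI exI[of _ "Suc i"] exI[of _ "Suc j"]) auto
  qed
  have new1: "(\<exists>i\<le>length (s#w). sx w = sx (drop i (s#w))) \<and> (\<exists>j\<le>length (s#w). st w = st (drop j (s#w)))"
    by (intro conjI exI[of _ "Suc 0"]) auto
  have new2: "(\<exists>i\<le>length (s#w). sx w - 1 = sx (drop i (s#w))) \<and> (\<exists>j\<le>length (s#w). st w = st (drop j (s#w)))"
    if "s = (LX, False)"
    using that by (intro conjI exI[of _ "Suc 0"] exI[of _ "0::nat"]) (auto simp: sx_def phx_def)
  obtain l e where s: "s = (l, e)" by (cases s)
  show ?case
  proof (cases l)
    case LA then show ?thesis using old new1 s by auto
  next
    case LT then show ?thesis using old s by auto
  next
    case LX then show ?thesis using old new1 new2 s by (cases e) auto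
  qed
qed

definition cntp :: "('a \<Rightarrow> int) \<Rightarrow> 'a list \<Rightarrow> nat" where
  "cntp p u = length (filter (\<lambda>s. p s \<noteq> 0) u)"

lemma abs_sum_le: assumes "\<forall>s. \<bar>p s\<bar> \<le> 1" shows "\<bar>sum_list (map p u)\<bar> \<le> int (cntp p u)"
proof (induction u)
  case Nil then show ?case by (simp add: cntp_def)
next
  case (Cons s u)
  have "\<bar>p s\<bar> \<le> 1" using assms by auto
  then show ?case using Cons by (cases "p s = 0") (auto simp: cntp_def abs_le_iff)
qed

lemma walk:
  assumes p1: "\<forall>s. \<bar>p s\<bar> \<le> 1" and z: "sum_list (map p w) = 0" and ij: "i \<le> j" "j \<le> length w"
  shows "2 * \<bar>sum_list (map p (drop i w)) - sum_list (map p (drop j w))\<bar> \<le> int (cntp p w)"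
proof -
  define seg where "seg = take (j - i) (drop i w)"
  have d1: "drop i w = seg @ drop j w"
    unfolding seg_def using ij by (metis append_take_drop_id drop_drop le_add_diff_inverse2)
  have d2: "w = take i w @ seg @ drop j w" using d1 by (metis append_take_drop_id)
  have S: "sum_list (map p w) = sum_list (map p (take i w)) + sum_list (map p seg) + sum_list (map p (drop j w))"
    using d2 by (metis add.assoc map_append sum_list_append)
  have C: "cntp p w = cntp p (take i w) + cntp p seg + cntp p (drop j w)"
    using d2 unfolding cntp_def by (metis add.assoc filter_append length_append)
  have e: "sum_list (map p (drop i w)) - sum_list (map p (drop j w)) = sum_list (map p seg)"
    using d1 by simp
  have a1: "\<bar>sum_list (map p seg)\<bar> \<le> int (cntp p seg)" using abs_sum_le[OF p1] by blast
  have a2: "\<bar>sum_list (map p (take i w))\<bar> \<le> int (cntp p (take i w))" using abs_sum_le[OF p1] by blast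
  have a3: "\<bar>sum_list (map p (drop j w))\<bar> \<le> int (cntp p (drop j w))" using abs_sum_le[OF p1] by blast
  show ?thesis unfolding e using a1 a2 a3 S C z by linarith
qed

lemma walk2:
  assumes p1: "\<forall>s. \<bar>p s\<bar> \<le> 1" and z: "sum_list (map p w) = 0" and ij: "i \<le> length w" "j \<le> length w"
  shows "2 * \<bar>sum_list (map p (drop i w)) - sum_list (map p (drop j w))\<bar> \<le> int (cntp p w)"
proof (cases "i \<le> j")
  case True then show ?thesis using walk[OF p1 z True ij(2)] by simp
next
  case False then show ?thesis using walk[OF p1 z _ ij(1), of j] by (simp add: abs_minus_commute)
qed

lemma cnt_xt: "cntp phx w + cntp pht w \<le> length w"
  by (induction w) (auto simp: cntp_def phx_def pht_def)

lemma range_bound: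
  assumes p1: "\<forall>s. \<bar>p s\<bar> \<le> 1" and z: "sum_list (map p w) = 0"
  shows "\<exists>g0 (H::nat). 2 * H \<le> cntp p w \<and>
     (\<forall>i\<le>length w. g0 \<le> sum_list (map p (drop i w)) \<and> sum_list (map p (drop i w)) \<le> g0 + int H)"
proof -
  define A where "A = (\<lambda>i. sum_list (map p (drop i w))) ` {0..length w}"
  have fA: "finite A" "A \<noteq> {}" unfolding A_def by auto
  have mem: "\<exists>i\<le>length w. x = sum_list (map p (drop i w))" if "x \<in> A" for x
    using that unfolding A_def by auto
  obtain i0 where i0: "i0 \<le> length w" "Min A = sum_list (map p (drop i0 w))"
    using mem[OF Min_in[OF fA]] by blast
  obtain j0 where j0: "j0 \<le> length w" "Max A = sum_list (map p (drop j0 w))"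
    using mem[OF Max_in[OF fA]] by blast
  have mm: "Min A \<le> Max A" using fA by simp
  have w2: "2 * \<bar>Max A - Min A\<bar> \<le> int (cntp p w)" using walk2[OF p1 z j0(1) i0(1)] i0 j0 by simp
  show ?thesis
  proof (intro exI[of _ "Min A"] exI[of _ "nat (Max A - Min A)"] conjI allI impI)
    have "int (2 * nat (Max A - Min A)) \<le> int (cntp p w)" using w2 mm by simp
    then show "2 * nat (Max A - Min A) \<le> cntp p w" by (simp only: of_nat_le_iff)
    fix i assume "i \<le> length w"
    then have "sum_list (map p (drop i w)) \<in> A" unfolding A_def by auto
    then show "Min A \<le> sum_list (map p (drop i w))" "sum_list (map p (drop i w)) \<le> Min A + int (nat (Max A - Min A))"
      using fA mm by auto
  qed
qed

lemma final_arith: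
  fixes H \<tau> kx kt n :: nat
  assumes "2 * H \<le> kx" "2 * \<tau> \<le> kt" "kx + kt \<le> n"
  shows "real (2 ^ ((2*H+2)*\<tau>)) + real \<tau> \<le> 2 powr (real n ^ 2 / 2) + 2 * real n ^ 2 + 3 * real n + 1"
proof -
  define e where "e = (2*H+2)*\<tau>"
  have "2 * e \<le> n * n"
  proof (cases "\<tau> = 0")
    case True then show ?thesis by (simp add: e_def)
  next
    case False
    then have "kt \<ge> 2" using assms by linarith
    then have "2*H+2 \<le> n" "2 * \<tau> \<le> n" using assms by linarith+
    then have "(2*H+2) * (2*\<tau>) \<le> n * n" by (rule mult_le_mono)
    then show ?thesis by (simp add: e_def algebra_simps)
  qed
  then have er: "real e \<le> real n ^ 2 / 2"
  proof -
    assume "2 * e \<le> n * n"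
    then have "real (2 * e) \<le> real (n * n)" by linarith
    then show ?thesis by (simp add: power2_eq_square)
  qed
  have "real (2 ^ e) = 2 powr real e" by (simp add: powr_realpow)
  also have "\<dots> \<le> 2 powr (real n ^ 2 / 2)" using er by (intro powr_mono) auto
  finally have a: "real (2 ^ e) \<le> 2 powr (real n ^ 2 / 2)" .
  have b: "real \<tau> \<le> real n" using assms by linarith
  have c: "0 \<le> 2 * real n ^ 2" by simp
  show ?thesis using a b c unfolding e_def by linarith
qed

theorem mainTheorem1:
  fixes w :: word
  assumes "sigma_x w = 0"
    and "\<exists>g. is_solution w g"
  shows "\<exists>g. is_solution w g \<and>
           \<bar>real_of_int (fst g)\<bar> \<le> 2 powr (real (length w) ^ 2 / 2) + 2 * real (length w) ^ 2
              + 3 * real (length w) + 1"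
proof -
  obtain g where g: "is_solution w g" using assms(2) by blast
  obtain d f where gdf: "g = (d, f)" by (cases g)
  have sx0: "sx w = 0" using assms(1) sigma_x_sx by simp
  have ev: "eval_word w (d, f) = lone" using g gdf is_solution_def by simp
  then have st0: "st w = 0" and eqs: "\<forall>N. fpart (ftm w) d f N = apart (atm w) d N"
    unfolding eval_formula lone_def using sx0 by (auto simp: fun_eq_iff)
  have finf: "finite {N. f N}" using g gdf is_solution_def in_L2_def by simp
  have sol: "solves (ftm w) (atm w) d f" using finf eqs solves_def by simp
  have px: "\<forall>s. \<bar>phx s\<bar> \<le> 1" by (simp add: phx_def)
  have pt: "\<forall>s. \<bar>pht s\<bar> \<le> 1" by (simp add: pht_def)
  obtain g0 H where H: "2 * H \<le> cntp phx w"
     "\<forall>i\<le>length w. g0 \<le> sx (drop i w) \<and> sx (drop i w) \<le> g0 + int H"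
    using range_bound[OF px, of w] sx0 unfolding sx_def by blast
  obtain b0 \<tau> where T: "2 * \<tau> \<le> cntp pht w"
     "\<forall>i\<le>length w. b0 \<le> st (drop i w) \<and> st (drop i w) \<le> b0 + int \<tau>"
    using range_bound[OF pt, of w] st0 unfolding st_def by blast
  have bnd: "\<forall>cb\<in>set (ftm w) \<union> set (atm w). g0 \<le> fst cb \<and> fst cb \<le> g0 + int H \<and> b0 \<le> snd cb \<and> snd cb \<le> b0 + int \<tau>"
  proof
    fix cb assume cb: "cb \<in> set (ftm w) \<union> set (atm w)"
    have "(\<exists>i\<le>length w. fst cb = sx (drop i w)) \<and> (\<exists>j\<le>length w. snd cb = st (drop j w))"
      by (rule bspec[OF terms_suffix cb])
    then obtain i j where "i \<le> length w" "fst cb = sx (drop i w)" "j \<le> length w" "snd cb = st (drop j w)"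
      by (elim conjE exE) assumption
    then show "g0 \<le> fst cb \<and> fst cb \<le> g0 + int H \<and> b0 \<le> snd cb \<and> snd cb \<le> b0 + int \<tau>"
      using H(2) T(2) by auto
  qed
  obtain d' f' where r: "\<bar>d'\<bar> \<le> 2^((2*H+2)*\<tau>) + int \<tau>" "solves (ftm w) (atm w) d' f'"
    using reduce[OF bnd sol] by blast
  have "eval_word w (d', f') = lone"
    unfolding eval_formula lone_def using r(2) sx0 st0 by (auto simp: solves_def fun_eq_iff)
  moreover have "in_L2 (d', f')" using r(2) by (simp add: in_L2_def solves_def)
  ultimately have sol': "is_solution w (d', f')" by (simp add: is_solution_def)
  have "\<bar>real_of_int d'\<bar> \<le> real (2^((2*H+2)*\<tau>)) + real \<tau>"
  proof -
    have "real_of_int \<bar>d'\<bar> \<le> real_of_int (2^((2*H+2)*\<tau>) + int \<tau>)" using r(1) by (simp only: of_int_le_iff)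
    then show ?thesis by simp
  qed
  also have "\<dots> \<le> 2 powr (real (length w) ^ 2 / 2) + 2 * real (length w) ^ 2 + 3 * real (length w) + 1"
    by (rule final_arith[OF H(1) T(1) cnt_xt])
  finally show ?thesis using sol' by (intro exI[of _ "(d', f')"]) simp
qed

end
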